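(* Let $a,d\in\mathbb C$ and let $n\in\mathbb C$ with $d-n\in\mathbb N$. Then the polynomial $$f(a,d,n)_x=\sum_{k=0}^{d-n}\binom{a+d+x-k}{k}\binom{d+k-x}{d-n-k}\in\mathbb C[x]$$ is constant in $x$; its value depends only on $a$, $d$ and $n$.
   Context: For $z\in\mathbb C$ (or $z$ a polynomial in $x$) and $k\in\mathbb N$, the binomial coefficient is $\binom{z}{k}=\frac{z(z-1)\cdots(z-k+1)}{k!}$. *)

theory Defs
  imports Complex_Main
begin

end

theory Submission
  imports Defs "HOL-Computational_Algebra.Polynomial"
begin

definition G :: "complex \<Rightarrow> complex \<Rightarrow> nat \<Rightarrow> complex" where
  "G u v m = (\<Sum>k\<le>m. ((u - of_nat k) gchoose k) * ((v + of_nat k) gchoose (m - k)))"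

lemma L1: "G u v (Suc m) = G (u-1) v (Suc m) + G (u-2) (v+1) m"
proof -
  have A: "G u v (Suc m) = ((v) gchoose (Suc m)) +
     (\<Sum>k\<le>m. ((u - of_nat (Suc k)) gchoose (Suc k)) * ((v + of_nat (Suc k)) gchoose (m - k)))"
    unfolding G_def by (subst sum.atMost_Suc_shift) simp
  have B: "G (u-1) v (Suc m) = ((v) gchoose (Suc m)) +
     (\<Sum>k\<le>m. ((u - 1 - of_nat (Suc k)) gchoose (Suc k)) * ((v + of_nat (Suc k)) gchoose (m - k)))"
    unfolding G_def by (subst sum.atMost_Suc_shift) simp
  have C: "G (u-2) (v+1) m =
     (\<Sum>k\<le>m. ((u - 1 - of_nat (Suc k)) gchoose k) * ((v + of_nat (Suc k)) gchoose (m - k)))"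
    unfolding G_def by (rule sum.cong) (simp_all add: algebra_simps)
  have D: "((u - of_nat (Suc k)) gchoose (Suc k)) =
      ((u - 1 - of_nat (Suc k)) gchoose (Suc k)) + ((u - 1 - of_nat (Suc k)) gchoose k)" for k
    using gbinomial_addition_formula[of "u - of_nat (Suc k)" k] by (simp add: algebra_simps)
  show ?thesis unfolding A B C D distrib_right sum.distrib by (rule add.assoc[symmetric])
qed

lemma L2: "G u v (Suc m) = G u (v-1) (Suc m) + G u (v-1) m"
proof -
  have A: "G u v (Suc m) = (\<Sum>k\<le>m. ((u - of_nat k) gchoose k) * ((v + of_nat k) gchoose (Suc (m - k))))
       + ((u - of_nat (Suc m)) gchoose (Suc m))"
    unfolding G_def by (simp add: Suc_diff_le)
  have B: "G u (v-1) (Suc m) = (\<Sum>k\<le>m. ((u - of_nat k) gchoose k) * ((v - 1 + of_nat k) gchoose (Suc (m - k))))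
       + ((u - of_nat (Suc m)) gchoose (Suc m))"
    unfolding G_def by (simp add: Suc_diff_le)
  have C: "G u (v-1) m = (\<Sum>k\<le>m. ((u - of_nat k) gchoose k) * ((v - 1 + of_nat k) gchoose (m - k)))"
    unfolding G_def by simp
  have D: "((v + of_nat k) gchoose (Suc j)) =
      ((v - 1 + of_nat k) gchoose (Suc j)) + ((v - 1 + of_nat k) gchoose j)" for k j
    using gbinomial_addition_formula[of "v + of_nat k" j] by (simp add: algebra_simps)
  show ?thesis unfolding A B C
    by (simp add: D distrib_left sum.distrib)
qed

lemma Q: "G (u+1) (v-1) m = G u v m"
proof (induction m arbitrary: u v)
  case 0
  then show ?case by (simp add: G_def)
next
  case (Suc m)
  have "G (u+1) (v-1) (Suc m) = G u (v-1) (Suc m) + G (u-1) v m"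
    using L1[of "u+1" "v-1" m] by simp
  moreover have "G u v (Suc m) = G u (v-1) (Suc m) + G u (v-1) m" by (rule L2)
  moreover have "G u (v-1) m = G (u-1) v m" using Suc[of "u-1" v] by simp
  ultimately show ?case by simp
qed

lemma Qn: "G (u + of_nat t) (v - of_nat t) m = G u v m"
proof (induction t)
  case 0 then show ?case by simp
next
  case (Suc t)
  have "G (u + of_nat (Suc t)) (v - of_nat (Suc t)) m = G (u + of_nat t + 1) (v - of_nat t - 1) m"
    by (simp add: algebra_simps)
  also have "\<dots> = G (u + of_nat t) (v - of_nat t) m" by (rule Q)
  finally show ?case using Suc by simp
qed

definition ispoly :: "(complex \<Rightarrow> complex) \<Rightarrow> bool" where
  "ispoly f = (\<exists>p. \<forall>x. poly p x = f x)"

lemma ispoly_mult: "ispoly f \<Longrightarrow> ispoly g \<Longrightarrow> ispoly (\<lambda>x. f x * g x)"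
  unfolding ispoly_def by (metis poly_mult)

lemma ispoly_diff: "ispoly f \<Longrightarrow> ispoly g \<Longrightarrow> ispoly (\<lambda>x. f x - g x)"
  unfolding ispoly_def by (metis poly_diff)

lemma ispoly_const: "ispoly (\<lambda>x. c)"
  unfolding ispoly_def by (rule exI[of _ "[:c:]"]) simp

lemma ispoly_sum: "finite A \<Longrightarrow> (\<And>k. k \<in> A \<Longrightarrow> ispoly (f k)) \<Longrightarrow> ispoly (\<lambda>x. \<Sum>k\<in>A. f k x)"
proof (induction A rule: finite_induct)
  case empty then show ?case using ispoly_const[of 0] by simp
next
  case (insert a A)
  then have "ispoly (f a)" "ispoly (\<lambda>x. \<Sum>k\<in>A. f k x)" by auto
  then obtain p q where "\<forall>x. poly p x = f a x" "\<forall>x. poly q x = (\<Sum>k\<in>A. f k x)"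
    unfolding ispoly_def by blast
  then have "\<forall>x. poly (p + q) x = (\<Sum>k\<in>insert a A. f k x)" using insert by simp
  then show ?case unfolding ispoly_def by blast
qed

lemma ispoly_gchoose: "ispoly (\<lambda>x. (c + e * x) gchoose k)"
proof -
  let ?p = "smult (1 / fact k) (\<Prod>i\<in>{0..<k}. [: c - of_nat i, e :])"
  have "\<forall>x. poly ?p x = (c + e * x) gchoose k"
    by (simp add: gbinomial_prod_rev poly_prod algebra_simps)
  then show ?thesis unfolding ispoly_def by blast
qed

theorem theorem4p2:
  fixes a d n :: complex and m :: nat
  assumes "d - n = of_nat m"
  shows "\<exists>c::complex. \<forall>x::complex.
           (\<Sum>k=0..m. ((a + d + x - of_nat k) gchoose k) * ((d + of_nat k - x) gchoose (m - k))) = c"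
proof -
  define f where "f x = G (a + d + x) (d - x) m" for x
  have eq: "(\<Sum>k=0..m. ((a + d + x - of_nat k) gchoose k) * ((d + of_nat k - x) gchoose (m - k))) = f x" for x
    unfolding f_def G_def atLeast0AtMost by (rule sum.cong) (simp_all add: algebra_simps)
  have "ispoly (\<lambda>x. \<Sum>k=0..m. ((a + d + x - of_nat k) gchoose k) * ((d + of_nat k - x) gchoose (m - k)))"
  proof (rule ispoly_sum)
    fix k
    have 1: "ispoly (\<lambda>x. ((a + d - of_nat k) + 1 * x) gchoose k)" by (rule ispoly_gchoose)
    have 2: "ispoly (\<lambda>x. ((d + of_nat k) + (-1) * x) gchoose (m - k))" by (rule ispoly_gchoose)
    have "ispoly (\<lambda>x. (((a + d - of_nat k) + 1 * x) gchoose k) * (((d + of_nat k) + (-1) * x) gchoose (m - k)))"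
      by (rule ispoly_mult[OF 1 2])
    then show "ispoly (\<lambda>x. ((a + d + x - of_nat k) gchoose k) * ((d + of_nat k - x) gchoose (m - k)))"
      by (simp add: algebra_simps)
  qed simp
  then have "ispoly f" using eq by simp
  then have "ispoly (\<lambda>x. f x - f 0)" using ispoly_diff ispoly_const by blast
  then obtain p where p: "\<forall>x. poly p x = f x - f 0" unfolding ispoly_def by blast
  have roots: "of_nat t \<in> {x. poly p x = 0}" for t :: nat
    using p Qn[of "a + d" t d m] by (simp add: f_def)
  have "infinite {x. poly p x = 0}"
  proof
    assume "finite {x. poly p x = 0}"
    then have "finite (range (of_nat :: nat \<Rightarrow> complex))"
      using roots by (meson finite_subset image_subsetI)
    then show False using finite_imageD inj_of_nat by (metis infinite_UNIV_char_0)
  qed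
  then have "p = 0" using poly_roots_finite by blast
  then have "\<forall>x. f x = f 0" using p by simp
  then show ?thesis using eq by auto
qed

end
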